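(* In the 3-body problem in ${\bf H}^2$ with masses $m_1,m_2,m_3>0$, fix $z>1$ and $\rho=(z^2-1)^{1/2}$. There exists $\omega\ne0$ such that ${\bf q}_i(t)=(\rho\cos(\omega t+\alpha_i),\rho\sin(\omega t+\alpha_i),z)$ with $\alpha_1=0,\alpha_2=2\pi/3,\alpha_3=4\pi/3$ is a solution of the equations of motion (the equilateral triangle rotating in its own plane $z=$ constant as an elliptic relative equilibrium) if and only if $m_1=m_2=m_3$.
   Context: The $n$-body problem in ${\bf H}^2$ (Weierstrass model): with the Lorentz inner product ${\bf a}\boxdot{\bf b}=a_xb_x+a_yb_y-a_zb_z$ on $\mathbb R^3$, ${\bf H}^2=\{(x,y,z): x^2+y^2-z^2=-1,\ z>0\}$. Bodies of masses $m_1,\dots,m_n>0$ have positions ${\bf q}_i=(x_i,y_i,z_i)\in{\bf H}^2$ and satisfy $$\ddot{\bf q}_i=\sum_{j\ne i}\frac{m_j[{\bf q}_j+({\bf q}_i\boxdot{\bf q}_j){\bf q}_i]}{[({\bf q}_i\boxdot{\bf q}_j)^2-1]^{3/2}}+(\dot{\bf q}_i\boxdot\dot{\bf q}_i){\bf q}_i,\qquad {\bf q}_i\boxdot{\bf q}_i=-1,\ \ {\bf q}_i\boxdot\dot{\bf q}_i=0,$$ $i=1,\dots,n$, defined only for collisionless configurations (${\bf q}_i\ne{\bf q}_j$ for $i\ne j$). *)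

theory Defs
  imports "HOL-Analysis.Analysis"
begin

definition lorentz :: "real \<times> real \<times> real \<Rightarrow> real \<times> real \<times> real \<Rightarrow> real" where
  "lorentz a b = fst a * fst b + fst (snd a) * fst (snd b) - snd (snd a) * snd (snd b)"

definition H2 :: "(real \<times> real \<times> real) set" where
  "H2 = {p. lorentz p p = -1 \<and> snd (snd p) > 0}"

definition nbody_rhs :: "nat \<Rightarrow> (nat \<Rightarrow> real) \<Rightarrow> (nat \<Rightarrow> real \<times> real \<times> real)
    \<Rightarrow> (nat \<Rightarrow> real \<times> real \<times> real) \<Rightarrow> nat \<Rightarrow> real \<times> real \<times> real" where
  "nbody_rhs n m q v i =
     (\<Sum>j\<in>{0..<n} - {i}.
        (m j / ((lorentz (q i) (q j))\<^sup>2 - 1) powr (3/2)) *\<^sub>R (q j + lorentz (q i) (q j) *\<^sub>R q i))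
     + lorentz (v i) (v i) *\<^sub>R q i"

definition is_nbody_solution :: "nat \<Rightarrow> (nat \<Rightarrow> real) \<Rightarrow> (nat \<Rightarrow> real \<Rightarrow> real \<times> real \<times> real) \<Rightarrow> bool" where
  "is_nbody_solution n m q \<longleftrightarrow>
     (\<exists>v :: nat \<Rightarrow> real \<Rightarrow> real \<times> real \<times> real.
        \<forall>t. (\<forall>i<n. q i t \<in> H2
                 \<and> lorentz (q i t) (v i t) = 0
                 \<and> (q i has_vector_derivative v i t) (at t)
                 \<and> (v i has_vector_derivative
                       nbody_rhs n m (\<lambda>k. q k t) (\<lambda>k. v k t) i) (at t))
           \<and> (\<forall>i<n. \<forall>j<n. i \<noteq> j \<longrightarrow> q i t \<noteq> q j t))"

end

theory Submission
  imports Defs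
begin

lemma cos_240: "cos (4*pi/3) = -1/2" and sin_240: "sin (4*pi/3) = - sqrt 3/2"
proof -
  have e: "4*pi/3 = pi/3 + pi" by simp
  have "cos (pi/3 + pi) = -1/2" unfolding cos_periodic_pi cos_60 by simp
  then show "cos (4*pi/3) = -1/2" using e by metis
  have "sin (pi/3 + pi) = - sqrt 3/2" unfolding sin_periodic_pi sin_60 by simp
  then show "sin (4*pi/3) = - sqrt 3/2" using e by metis
qed

lemma ang_simps: "2*pi*real (0::nat)/3 = 0" "2*pi*real (1::nat)/3 = 2*pi/3" "2*pi*real (2::nat)/3 = 4*pi/3"
  by simp_all

lemma sum_cos: "cos (x + 2*pi*real (0::nat)/3) + cos (x + 2*pi*real (1::nat)/3) + cos (x + 2*pi*real (2::nat)/3) = 0"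
  unfolding ang_simps cos_add cos_120 sin_120 cos_240 sin_240 by (simp add: algebra_simps)

lemma sum_sin: "sin (x + 2*pi*real (0::nat)/3) + sin (x + 2*pi*real (1::nat)/3) + sin (x + 2*pi*real (2::nat)/3) = 0"
  unfolding ang_simps sin_add cos_120 sin_120 cos_240 sin_240 by (simp add: algebra_simps)

lemma cosdiff: assumes "i<3" "j<3" "i\<noteq>j"
  shows "cos (x + 2*pi*real i/3) * cos (x + 2*pi*real j/3) + sin (x + 2*pi*real i/3) * sin (x + 2*pi*real j/3) = -1/2"
proof -
  have "cos (x + 2*pi*real i/3) * cos (x + 2*pi*real j/3) + sin (x + 2*pi*real i/3) * sin (x + 2*pi*real j/3)
     = cos ((x + 2*pi*real i/3) - (x + 2*pi*real j/3))" by (rule cos_diff[symmetric])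
  also have "(x + 2*pi*real i/3) - (x + 2*pi*real j/3) = 2*pi*real i/3 - 2*pi*real j/3" by simp
  also have "cos (2*pi*real i/3 - 2*pi*real j/3) = -1/2"
  proof -
    have "i = 0 \<or> i = 1 \<or> i = 2" "j = 0 \<or> j = 1 \<or> j = 2" using assms by auto
    then show ?thesis using assms(3)
      by (auto simp: cos_diff cos_120 sin_120 cos_240 sin_240 ang_simps[simplified])
  qed
  finally show ?thesis .
qed

definition Q :: "real \<Rightarrow> real \<Rightarrow> real \<Rightarrow> nat \<Rightarrow> real \<Rightarrow> real\<times>real\<times>real" where
 "Q r z w i t = (r * cos (w * t + 2 * pi * real i / 3), r * sin (w * t + 2 * pi * real i / 3), z)"
definition V :: "real \<Rightarrow> real \<Rightarrow> nat \<Rightarrow> real \<Rightarrow> real\<times>real\<times>real" where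
 "V r w i t = (- r * w * sin (w * t + 2 * pi * real i / 3), r * w * cos (w * t + 2 * pi * real i / 3), 0)"
definition A :: "real \<Rightarrow> real \<Rightarrow> nat \<Rightarrow> real \<Rightarrow> real\<times>real\<times>real" where
 "A r w i t = (- r * w^2 * cos (w * t + 2 * pi * real i / 3), - r * w^2 * sin (w * t + 2 * pi * real i / 3), 0)"

lemma dQ: "(Q r z w i has_vector_derivative V r w i t) (at t)"
  unfolding Q_def V_def
  by (intro has_vector_derivative_Pair has_vector_derivative_const)
     (auto intro!: derivative_eq_intros simp: has_real_derivative_iff_has_vector_derivative[symmetric])

lemma dV: "(V r w i has_vector_derivative A r w i t) (at t)"
  unfolding A_def V_def
  by (intro has_vector_derivative_Pair has_vector_derivative_const)
     (auto intro!: derivative_eq_intros simp: has_real_derivative_iff_has_vector_derivative[symmetric] power2_eq_square)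

lemma lorQ: "i<3 \<Longrightarrow> j<3 \<Longrightarrow> i\<noteq>j \<Longrightarrow> lorentz (Q r z w i t) (Q r z w j t) = r^2 * (-1/2) - z^2"
proof -
  assume a: "i<3" "j<3" "i\<noteq>j"
  have "lorentz (Q r z w i t) (Q r z w j t) = r^2 * (cos (w*t + 2*pi*real i/3) * cos (w*t + 2*pi*real j/3) + sin (w*t + 2*pi*real i/3) * sin (w*t + 2*pi*real j/3)) - z^2"
    by (simp add: lorentz_def Q_def power2_eq_square algebra_simps)
  then show ?thesis using cosdiff[OF a] by simp
qed

lemma lorQQ: "r^2 = z^2 - 1 \<Longrightarrow> lorentz (Q r z w i t) (Q r z w i t) = -1"
  using sin_cos_squared_add[of "w*t + 2*pi*real i/3"] unfolding lorentz_def Q_def fst_conv snd_conv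
  by algebra

lemma lorVV: "lorentz (V r w i t) (V r w i t) = r^2 * w^2"
  using sin_cos_squared_add[of "w*t + 2*pi*real i/3"] unfolding lorentz_def V_def fst_conv snd_conv
  by algebra

lemma lorQV: "lorentz (Q r z w i t) (V r w i t) = 0"
  by (simp add: lorentz_def V_def Q_def algebra_simps)

lemma rhs_expl: "i<3 \<Longrightarrow> nbody_rhs 3 m (\<lambda>k. Q r z w k t) vv i =
   (\<Sum>j\<in>{0..<3}-{i}. (m j / ((r^2 * (-1/2) - z^2)^2 - 1) powr (3/2)) *\<^sub>R (Q r z w j t + (r^2 * (-1/2) - z^2) *\<^sub>R Q r z w i t))
   + lorentz (vv i) (vv i) *\<^sub>R Q r z w i t"
  unfolding nbody_rhs_def
  by (intro arg_cong2[where f="(+)"] sum.cong refl) (auto simp: lorQ)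

lemma sets3: "{0..<3::nat}-{0} = {1,2}" "{0..<3::nat}-{1} = {0,2}" "{0..<3::nat}-{2} = {0,1}" "{0..<3::nat}-{Suc 0} = {0,2}"
  by auto

lemma rev_eq:
  assumes r2: "r^2 = z^2-1" and i: "i<3" and mm: "m 1 = m 0" "m 2 = m 0"
    and w2: "w^2 = 3*(m 0 / ((r^2*(-1/2) - z^2)^2 - 1) powr (3/2))"
  shows "A r w i t = nbody_rhs 3 m (\<lambda>k. Q r z w k t) (\<lambda>k. V r w k t) i"
proof -
  define D where "D = ((r^2*(-1/2) - z^2)^2 - 1) powr (3/2)"
  define k where "k = m 0 / D"
  define s where "s = r^2*(-1/2) - z^2"
  define C where "C = (\<lambda>j::nat. cos (w*t + 2*pi*real j/3))"
  define S where "S = (\<lambda>j::nat. sin (w*t + 2*pi*real j/3))"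
  have Qe: "\<And>j. Q r z w j t = (r * C j, r * S j, z)" by (simp add: Q_def C_def S_def)
  have Ae: "\<And>j. A r w j t = (- r * w^2 * C j, - r * w^2 * S j, 0)" by (simp add: A_def C_def S_def)
  have sc: "C 2 = - C 0 - C 1" using sum_cos[of "w*t"] unfolding C_def by linarith
  have ss: "S 2 = - S 0 - S 1" using sum_sin[of "w*t"] unfolding S_def by linarith
  have w2': "w^2 = 3*k" using w2 by (simp add: k_def D_def)
  have mk: "\<And>j. j < 3 \<Longrightarrow> m j / ((r^2*(-1/2) - z^2)^2 - 1) powr (3/2) = k"
  proof -
    fix j :: nat assume "j < 3" then have "j=0 \<or> j=1 \<or> j=2" by auto
    then show "m j / ((r^2*(-1/2) - z^2)^2 - 1) powr (3/2) = k" using mm by (auto simp: k_def D_def)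
  qed
  have rhs: "nbody_rhs 3 m (\<lambda>k. Q r z w k t) (\<lambda>k. V r w k t) i =
     (\<Sum>j\<in>{0..<3}-{i}. k *\<^sub>R (Q r z w j t + s *\<^sub>R Q r z w i t)) + (r^2 * w^2) *\<^sub>R Q r z w i t"
    unfolding rhs_expl[OF i] lorVV
    by (intro arg_cong2[where f="(+)"] sum.cong refl) (use i mk in \<open>auto simp: s_def\<close>)
  have "i = 0 \<or> i = 1 \<or> i = 2" using i by auto
  then show ?thesis unfolding rhs
  proof (elim disjE)
    assume hi: "i = 0" show "A r w i t = (\<Sum>j\<in>{0..<3}-{i}. k *\<^sub>R (Q r z w j t + s *\<^sub>R Q r z w i t)) + (r^2 * w^2) *\<^sub>R Q r z w i t"
      by (simp add: hi w2' r2 sc ss sets3 Ae Qe s_def prod_eq_iff; algebra)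
  next
    assume hi: "i = 1" show "A r w i t = (\<Sum>j\<in>{0..<3}-{i}. k *\<^sub>R (Q r z w j t + s *\<^sub>R Q r z w i t)) + (r^2 * w^2) *\<^sub>R Q r z w i t"
      by (simp add: hi w2' r2 sc ss sets3 Ae Qe s_def prod_eq_iff; algebra)
  next
    assume hi: "i = 2" show "A r w i t = (\<Sum>j\<in>{0..<3}-{i}. k *\<^sub>R (Q r z w j t + s *\<^sub>R Q r z w i t)) + (r^2 * w^2) *\<^sub>R Q r z w i t"
      by (simp add: hi w2' r2 sc ss sets3 Ae Qe s_def prod_eq_iff; algebra)
  qed
qed

lemma fwd:
  assumes r2: "r^2 = z^2 - 1" and z: "z > 1"
    and sol: "is_nbody_solution 3 m (Q r z w)"
  shows "m 0 = m 1 \<and> m 1 = m 2"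
proof -
  define s where "s = r^2*(-1/2) - z^2"
  define D where "D = (s^2 - 1) powr (3/2)"
  have zz: "1 < z^2" using z by (intro one_less_power) auto
  have s1: "s < -1" using zz unfolding s_def r2 by (simp add: field_simps)
  have "1 < (-s)^2" using s1 by (intro one_less_power) auto
  then have Dp: "D > 0" unfolding D_def by simp
  define X where "X = (z + s*z) / D"
  have "z * (1 + s) < 0" using s1 z by (intro mult_pos_neg) auto
  then have Xn: "X \<noteq> 0" unfolding X_def using Dp by (simp add: algebra_simps)
  obtain v where hv: "\<And>t i. i<3 \<Longrightarrow> (Q r z w i has_vector_derivative v i t) (at t)"
     "\<And>t i. i<3 \<Longrightarrow> (v i has_vector_derivative nbody_rhs 3 m (\<lambda>k. Q r z w k t) (\<lambda>k. v k t) i) (at t)"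
    using sol unfolding is_nbody_solution_def by blast
  have vV: "\<And>i. i<3 \<Longrightarrow> v i = V r w i"
    using hv(1) dQ vector_derivative_unique_at by blast
  have eq: "(\<Sum>j\<in>{0..<3}-{i}. m j * X) + r^2*w^2*z = 0" if i: "i<3" for i
  proof -
    have "A r w i 0 = nbody_rhs 3 m (\<lambda>k. Q r z w k 0) (\<lambda>k. v k 0) i"
      using hv(2)[OF i, of 0] dV[of r w i 0] vector_derivative_unique_at vV[OF i] by metis
    also have "\<dots> = (\<Sum>j\<in>{0..<3}-{i}. (m j / D) *\<^sub>R (Q r z w j 0 + s *\<^sub>R Q r z w i 0)) + (r^2*w^2) *\<^sub>R Q r z w i 0"
      unfolding rhs_expl[OF i] vV[OF i] lorVV D_def s_def ..
    finally have "snd (snd (A r w i 0)) = snd (snd ((\<Sum>j\<in>{0..<3}-{i}. (m j / D) *\<^sub>R (Q r z w j 0 + s *\<^sub>R Q r z w i 0)) + (r^2*w^2) *\<^sub>R Q r z w i 0))"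
      by simp
    then show ?thesis by (simp add: snd_sum A_def Q_def X_def)
  qed
  have e0: "m 1 * X + m 2 * X + r^2*w^2*z = 0" using eq[of 0] by (simp add: sets3)
  have e1: "m 0 * X + m 2 * X + r^2*w^2*z = 0" using eq[of 1] by (simp add: sets3)
  have e2: "m 0 * X + m 1 * X + r^2*w^2*z = 0" using eq[of 2] by (simp add: sets3)
  have "m 1 * X = m 0 * X" "m 2 * X = m 1 * X" using e0 e1 e2 by linarith+
  then show ?thesis using Xn by simp
qed

theorem mainTheorem14:
  fixes m :: "nat \<Rightarrow> real" and z :: real
  assumes "m 0 > 0" and "m 1 > 0" and "m 2 > 0"
    and "z > 1"
  shows "(\<exists>\<omega>::real. \<omega> \<noteq> 0 \<and>
            is_nbody_solution 3 m
              (\<lambda>i t. (sqrt (z\<^sup>2 - 1) * cos (\<omega> * t + 2 * pi * real i / 3),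
                      sqrt (z\<^sup>2 - 1) * sin (\<omega> * t + 2 * pi * real i / 3), z)))
         \<longleftrightarrow> (m 0 = m 1 \<and> m 1 = m 2)"
proof -
  define r where "r = sqrt (z^2 - 1)"
  have zz: "1 < z^2" using assms(4) by (intro one_less_power) auto
  have r2: "r^2 = z^2 - 1" unfolding r_def using zz by simp
  have QQ: "\<And>w. (\<lambda>i t. (sqrt (z\<^sup>2 - 1) * cos (w * t + 2 * pi * real i / 3),
                      sqrt (z\<^sup>2 - 1) * sin (w * t + 2 * pi * real i / 3), z)) = Q r z w"
    by (simp add: fun_eq_iff Q_def r_def)
  show ?thesis unfolding QQ
  proof
    assume "\<exists>w. w \<noteq> 0 \<and> is_nbody_solution 3 m (Q r z w)"
    then show "m 0 = m 1 \<and> m 1 = m 2" using fwd[OF r2 assms(4)] by blast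
  next
    assume mm: "m 0 = m 1 \<and> m 1 = m 2"
    define s where "s = r^2*(-1/2) - z^2"
    define D where "D = (s^2 - 1) powr (3/2)"
    have s1: "s < -1" using zz unfolding s_def r2 by (simp add: field_simps)
    have "1 < (-s)^2" using s1 by (intro one_less_power) auto
    then have Dp: "D > 0" unfolding D_def by simp
    define w where "w = sqrt (3 * (m 0 / D))"
    have kp: "3 * (m 0 / D) > 0" using assms(1) Dp by simp
    have w2: "w^2 = 3 * (m 0 / D)" unfolding w_def using kp by simp
    have wn: "w \<noteq> 0" unfolding w_def using kp by auto
    have sol: "is_nbody_solution 3 m (Q r z w)"
      unfolding is_nbody_solution_def
    proof (intro exI[of _ "V r w"] allI conjI impI)
      fix t i assume i: "i < (3::nat)"
      show "Q r z w i t \<in> H2" unfolding H2_def using lorQQ[OF r2] assms(4) by (simp add: Q_def)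
      show "lorentz (Q r z w i t) (V r w i t) = 0" by (rule lorQV)
      show "(Q r z w i has_vector_derivative V r w i t) (at t)" by (rule dQ)
      show "(V r w i has_vector_derivative nbody_rhs 3 m (\<lambda>k. Q r z w k t) (\<lambda>k. V r w k t) i) (at t)"
        using dV[of r w i t] rev_eq[OF r2 i, of m w t] mm w2 unfolding D_def s_def by simp
    next
      fix t i j assume i: "i < (3::nat)" and j: "j < 3" and ij: "i \<noteq> j"
      show "Q r z w i t \<noteq> Q r z w j t"
      proof
        assume "Q r z w i t = Q r z w j t"
        then have "lorentz (Q r z w i t) (Q r z w j t) = -1" using lorQQ[OF r2] by metis
        then have "s = -1" using lorQ[OF i j ij] unfolding s_def by simp
        then show False using s1 by simp
      qed
    qed
    show "\<exists>w. w \<noteq> 0 \<and> is_nbody_solution 3 m (Q r z w)" using wn sol by blast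
  qed
qed

end
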